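(* Let $L$ be a finite-dimensional Lie algebra over a field $F$. Then $L$ is solvable if and only if $\eta(L:M)=\dim(L/M)$ for all maximal subalgebras $M$ of $L$.
   Context: For a nonzero subalgebra $X$ of $L$, the strict core $k(X)$ is the sum of all ideals of $L$ that are proper subalgebras of $X$ (it is $0$ if there are none). For a maximal subalgebra $M$, a subalgebra $C$ is a completion of $M$ if $C\not\subseteq M$ but every proper subalgebra of $C$ that is an ideal of $L$ is contained in $M$; an ideal completion is a completion that is an ideal of $L$. The ideal index $\eta(L:M)$ is $\dim(C/k(C))$ for any ideal completion $C$ of $M$ (independent of the choice of $C$). *)

theory Defs
  imports Main "HOL.Vector_Spaces"
begin

text \<open>A Lie algebra over a field 'f, with underlying vector space the whole type 'v,
  scalar multiplication s and Lie bracket b.\<close>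

definition lie_algebra :: "('f::field \<Rightarrow> 'v::ab_group_add \<Rightarrow> 'v) \<Rightarrow> ('v \<Rightarrow> 'v \<Rightarrow> 'v) \<Rightarrow> bool" where
  "lie_algebra s b \<longleftrightarrow> vector_space s
     \<and> (\<forall>x y z. b (x + y) z = b x z + b y z)
     \<and> (\<forall>x y z. b x (y + z) = b x y + b x z)
     \<and> (\<forall>a x y. b (s a x) y = s a (b x y))
     \<and> (\<forall>a x y. b x (s a y) = s a (b x y))
     \<and> (\<forall>x. b x x = 0)
     \<and> (\<forall>x y z. b x (b y z) + b y (b z x) + b z (b x y) = 0)"

definition lie_finite_dim :: "('f::field \<Rightarrow> 'v::ab_group_add \<Rightarrow> 'v) \<Rightarrow> bool" where
  "lie_finite_dim s \<longleftrightarrow> (\<exists>B. finite B \<and> module.span s B = UNIV)"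

definition lie_subalgebra :: "('f::field \<Rightarrow> 'v::ab_group_add \<Rightarrow> 'v) \<Rightarrow> ('v \<Rightarrow> 'v \<Rightarrow> 'v) \<Rightarrow> 'v set \<Rightarrow> bool" where
  "lie_subalgebra s b S \<longleftrightarrow> module.subspace s S \<and> (\<forall>x\<in>S. \<forall>y\<in>S. b x y \<in> S)"

definition lie_ideal :: "('f::field \<Rightarrow> 'v::ab_group_add \<Rightarrow> 'v) \<Rightarrow> ('v \<Rightarrow> 'v \<Rightarrow> 'v) \<Rightarrow> 'v set \<Rightarrow> bool" where
  "lie_ideal s b I \<longleftrightarrow> module.subspace s I \<and> (\<forall>x. \<forall>y\<in>I. b x y \<in> I)"

definition maximal_subalgebra :: "('f::field \<Rightarrow> 'v::ab_group_add \<Rightarrow> 'v) \<Rightarrow> ('v \<Rightarrow> 'v \<Rightarrow> 'v) \<Rightarrow> 'v set \<Rightarrow> bool" where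
  "maximal_subalgebra s b M \<longleftrightarrow> lie_subalgebra s b M \<and> M \<noteq> UNIV
     \<and> (\<forall>N. lie_subalgebra s b N \<and> M \<subseteq> N \<longrightarrow> N = M \<or> N = UNIV)"

fun derived_series :: "('f::field \<Rightarrow> 'v::ab_group_add \<Rightarrow> 'v) \<Rightarrow> ('v \<Rightarrow> 'v \<Rightarrow> 'v) \<Rightarrow> nat \<Rightarrow> 'v set" where
  "derived_series s b 0 = UNIV"
| "derived_series s b (Suc k) =
     module.span s {b x y | x y. x \<in> derived_series s b k \<and> y \<in> derived_series s b k}"

definition lie_solvable :: "('f::field \<Rightarrow> 'v::ab_group_add \<Rightarrow> 'v) \<Rightarrow> ('v \<Rightarrow> 'v \<Rightarrow> 'v) \<Rightarrow> bool" where
  "lie_solvable s b \<longleftrightarrow> (\<exists>k. derived_series s b k = {0})"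

definition strict_core :: "('f::field \<Rightarrow> 'v::ab_group_add \<Rightarrow> 'v) \<Rightarrow> ('v \<Rightarrow> 'v \<Rightarrow> 'v) \<Rightarrow> 'v set \<Rightarrow> 'v set" where
  "strict_core s b X = module.span s (\<Union>{I. lie_ideal s b I \<and> I \<subset> X})"

definition lie_completion :: "('f::field \<Rightarrow> 'v::ab_group_add \<Rightarrow> 'v) \<Rightarrow> ('v \<Rightarrow> 'v \<Rightarrow> 'v) \<Rightarrow> 'v set \<Rightarrow> 'v set \<Rightarrow> bool" where
  "lie_completion s b M C \<longleftrightarrow> lie_subalgebra s b C \<and> \<not> C \<subseteq> M
     \<and> (\<forall>I. lie_subalgebra s b I \<and> I \<subset> C \<and> lie_ideal s b I \<longrightarrow> I \<subseteq> M)"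

definition ideal_completion :: "('f::field \<Rightarrow> 'v::ab_group_add \<Rightarrow> 'v) \<Rightarrow> ('v \<Rightarrow> 'v \<Rightarrow> 'v) \<Rightarrow> 'v set \<Rightarrow> 'v set \<Rightarrow> bool" where
  "ideal_completion s b M C \<longleftrightarrow> lie_completion s b M C \<and> lie_ideal s b C"

text \<open>Ideal index eta(L:M) = dim(C / k(C)) = dim C - dim k(C) for an ideal completion C
  (independent of the choice of C).\<close>
definition ideal_index :: "('f::field \<Rightarrow> 'v::ab_group_add \<Rightarrow> 'v) \<Rightarrow> ('v \<Rightarrow> 'v \<Rightarrow> 'v) \<Rightarrow> 'v set \<Rightarrow> nat" where
  "ideal_index s b M = (let C = (SOME C. ideal_completion s b M C) in
      vector_space.dim s C - vector_space.dim s (strict_core s b C))"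

end

theory Submission
  imports Defs
begin


locale lieA =
  fixes s :: "'f::field \<Rightarrow> 'v::ab_group_add \<Rightarrow> 'v" and b :: "'v \<Rightarrow> 'v \<Rightarrow> 'v"
  assumes LA: "lie_algebra s b" and FD: "lie_finite_dim s"
begin

sublocale vector_space s using LA by (simp add: lie_algebra_def)

lemma bl: "b (x + y) z = b x z + b y z" using LA by (simp add: lie_algebra_def)
lemma br: "b x (y + z) = b x y + b x z" using LA by (simp add: lie_algebra_def)
lemma bsl: "b (s a x) y = s a (b x y)" using LA by (simp add: lie_algebra_def)
lemma bsr: "b x (s a y) = s a (b x y)" using LA by (simp add: lie_algebra_def)
lemma balt[simp]: "b x x = 0" using LA by (simp add: lie_algebra_def)
lemma jac: "b x (b y z) + b y (b z x) + b z (b x y) = 0" using LA by (simp add: lie_algebra_def)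

lemma b0l[simp]: "b 0 y = 0"
  using bl[of 0 0 y] by simp
lemma b0r[simp]: "b x 0 = 0"
  using br[of x 0 0] by simp
lemma bnl: "b (- x) y = - b x y"
  using bl[of x "-x" y] minus_unique[of "b x y" "b (-x) y"] by simp
lemma bnr: "b x (- y) = - b x y"
  using br[of x y "-y"] minus_unique[of "b x y" "b x (-y)"] by simp
lemma bdl: "b (x - y) z = b x z - b y z"
  using bl[of x "-y" z] by (simp add: bnl)
lemma bdr: "b x (y - z) = b x y - b x z"
  using br[of x y "-z"] by (simp add: bnr)
lemma anti: "b y x = - b x y"
proof -
  have e: "b (x+y) (x+y) = b x x + b y x + (b x y + b y y)" by (simp only: bl br)
  then have "b x y + b y x = 0" by (simp add: add.commute)
  then show ?thesis using minus_unique[of "b x y" "b y x"] by simp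
qed
lemma jac2: "b x (b y z) = b (b x y) z + b y (b x z)"
proof -
  have "b x (b y z) = - b y (b z x) - b z (b x y)"
    using jac[of x y z] by (simp add: eq_neg_iff_add_eq_0 algebra_simps)
  also have "\<dots> = b (b x y) z + b y (b x z)"
    using anti[of z x] anti[of z "b x y"] by (simp add: bnr)
  finally show ?thesis .
qed

lemma bspan_r:
  assumes "y \<in> span S" "subspace T" "\<And>z. z \<in> S \<Longrightarrow> b x z \<in> T"
  shows "b x y \<in> T"
proof -
  have "subspace {y. b x y \<in> T}"
    using assms(2) by (auto simp: subspace_def br bsr)
  then show ?thesis using span_induct[OF assms(1), of "\<lambda>y. b x y \<in> T"] assms(3) by auto
qed

lemma bspan_l:
  assumes "y \<in> span S" "subspace T" "\<And>z. z \<in> S \<Longrightarrow> b z x \<in> T"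
  shows "b y x \<in> T"
proof -
  have "subspace {y. b y x \<in> T}"
    using assms(2) by (auto simp: subspace_def bl bsl)
  then show ?thesis using span_induct[OF assms(1), of "\<lambda>y. b y x \<in> T"] assms(3) by auto
qed

abbreviation "ideal \<equiv> lie_ideal s b"
abbreviation "subalg \<equiv> lie_subalgebra s b"
definition "brk A B = span {b x y | x y. x \<in> A \<and> y \<in> B}"
definition "ssum A B = {x + y | x y. x \<in> A \<and> y \<in> B}"

lemma ideal_subspace: "ideal I \<Longrightarrow> subspace I" by (simp add: lie_ideal_def)
lemma ideal_r: "ideal I \<Longrightarrow> y \<in> I \<Longrightarrow> b x y \<in> I" by (simp add: lie_ideal_def)
lemma ideal_l: "ideal I \<Longrightarrow> y \<in> I \<Longrightarrow> b y x \<in> I"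
  using anti[of y x] ideal_r[of I y x] subspace_neg[OF ideal_subspace] by fastforce
lemma ideal_subalg: "ideal I \<Longrightarrow> subalg I" by (simp add: lie_ideal_def lie_subalgebra_def)
lemma subalg_subspace: "subalg I \<Longrightarrow> subspace I" by (simp add: lie_subalgebra_def)
lemma subalg_b: "subalg I \<Longrightarrow> x \<in> I \<Longrightarrow> y \<in> I \<Longrightarrow> b x y \<in> I" by (simp add: lie_subalgebra_def)
lemma idealI: "subspace I \<Longrightarrow> (\<And>x y. y \<in> I \<Longrightarrow> b x y \<in> I) \<Longrightarrow> ideal I"
  by (simp add: lie_ideal_def)
lemma ideal_UNIV: "ideal UNIV" by (simp add: lie_ideal_def)
lemma ideal_0: "ideal {0}" by (simp add: lie_ideal_def)

lemma ideal_inter: "ideal I \<Longrightarrow> ideal J \<Longrightarrow> ideal (I \<inter> J)"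
  by (auto simp: lie_ideal_def intro: subspace_inter)

lemma subalg_inter: "subalg I \<Longrightarrow> subalg J \<Longrightarrow> subalg (I \<inter> J)"
  by (auto simp: lie_subalgebra_def intro: subspace_inter)

lemma subspace_ssum: "subspace A \<Longrightarrow> subspace B \<Longrightarrow> subspace (ssum A B)"
  unfolding ssum_def by (rule subspace_sums)

lemma ideal_ssum: assumes "ideal I" "ideal J" shows "ideal (ssum I J)"
proof (rule idealI)
  show "subspace (ssum I J)" using assms by (simp add: subspace_ssum ideal_subspace)
  fix x y assume "y \<in> ssum I J"
  then obtain u v where "y = u + v" "u \<in> I" "v \<in> J" by (auto simp: ssum_def)
  then have "b x y = b x u + b x v" "b x u \<in> I" "b x v \<in> J" using assms by (auto simp: br ideal_r)
  then show "b x y \<in> ssum I J" unfolding ssum_def by blast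
qed

lemma subalg_ssum: assumes "subalg M" "ideal C" shows "subalg (ssum M C)"
  unfolding lie_subalgebra_def
proof safe
  show "subspace (ssum M C)" using assms by (simp add: subspace_ssum ideal_subspace subalg_subspace)
  fix x y assume "x \<in> ssum M C" "y \<in> ssum M C"
  then obtain m1 c1 m2 c2 where "x = m1 + c1" "y = m2 + c2" "m1 \<in> M" "m2 \<in> M" "c1 \<in> C" "c2 \<in> C"
    by (auto simp: ssum_def)
  moreover have "b (m1 + c1) (m2 + c2) = b m1 m2 + (b m1 c2 + b c1 (m2 + c2))"
    by (simp add: bl br algebra_simps)
  moreover have "b m1 m2 \<in> M" using assms calculation by (simp add: subalg_b)
  moreover have "b m1 c2 + b c1 (m2 + c2) \<in> C"
    using assms calculation by (simp add: subspace_add ideal_subspace ideal_r ideal_l)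
  ultimately show "b x y \<in> ssum M C" by (auto simp: ssum_def)
qed

lemma ssum_sup1: assumes "subspace B" shows "A \<subseteq> ssum A B"
proof
  fix x assume "x \<in> A"
  moreover have "0 \<in> B" using assms subspace_0 by blast
  moreover have "x = x + 0" by simp
  ultimately show "x \<in> ssum A B" unfolding ssum_def by blast
qed
lemma ssum_sup2: assumes "subspace A" shows "B \<subseteq> ssum A B"
proof
  fix x assume "x \<in> B"
  moreover have "0 \<in> A" using assms subspace_0 by blast
  moreover have "x = 0 + x" by simp
  ultimately show "x \<in> ssum A B" unfolding ssum_def by blast
qed
lemma ssum_le: "subspace C \<Longrightarrow> A \<subseteq> C \<Longrightarrow> B \<subseteq> C \<Longrightarrow> ssum A B \<subseteq> C"
  by (auto simp: ssum_def intro: subspace_add)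

lemma ideal_span_Union: assumes "\<And>I. I \<in> F \<Longrightarrow> ideal I" shows "ideal (span (\<Union>F))"
proof (rule idealI)
  fix x y assume "y \<in> span (\<Union>F)"
  then show "b x y \<in> span (\<Union>F)"
  proof (rule bspan_r)
    fix z assume "z \<in> \<Union>F"
    then obtain I where "I \<in> F" "z \<in> I" by auto
    then have "b x z \<in> I" using assms ideal_r by blast
    then show "b x z \<in> span (\<Union>F)" using \<open>I \<in> F\<close> by (blast intro: span_base)
  qed simp
qed simp

lemma ideal_brk: assumes I: "ideal I" and J: "ideal J" shows "ideal (brk I J)"
proof (rule idealI)
  show "subspace (brk I J)" by (simp add: brk_def)
  fix x y assume "y \<in> brk I J"
  then show "b x y \<in> brk I J" unfolding brk_def
  proof (rule bspan_r)
    fix z assume "z \<in> {b x y |x y. x \<in> I \<and> y \<in> J}"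
    then obtain i j where z: "z = b i j" "i \<in> I" "j \<in> J" by auto
    have "b x z = b (b x i) j + b i (b x j)" unfolding z(1) by (rule jac2)
    moreover have "b (b x i) j \<in> span {b x y |x y. x \<in> I \<and> y \<in> J}"
      using z ideal_r[OF I z(2)] by (intro span_base) blast
    moreover have "b i (b x j) \<in> span {b x y |x y. x \<in> I \<and> y \<in> J}"
      using z ideal_r[OF J z(3)] by (intro span_base) blast
    ultimately show "b x z \<in> span {b x y |x y. x \<in> I \<and> y \<in> J}" by (simp add: span_add)
  qed simp
qed

lemma brk_le: assumes "subspace T" "\<And>x y. x \<in> A \<Longrightarrow> y \<in> B \<Longrightarrow> b x y \<in> T" shows "brk A B \<subseteq> T"
  unfolding brk_def using assms by (intro span_minimal) blast+

lemma brk_mem: "x \<in> A \<Longrightarrow> y \<in> B \<Longrightarrow> b x y \<in> brk A B"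
  unfolding brk_def by (auto intro: span_base)

lemma ds_Suc: "derived_series s b (Suc k) = brk (derived_series s b k) (derived_series s b k)"
  by (simp add: brk_def)

lemma ds_ideal: "ideal (derived_series s b k)"
proof (induction k)
  case 0 then show ?case by (simp add: ideal_UNIV)
next
  case (Suc k) then show ?case unfolding ds_Suc by (intro ideal_brk)
qed

lemma ds_mono: "derived_series s b (Suc k) \<subseteq> derived_series s b k"
  unfolding ds_Suc using ds_ideal[of k]
  by (intro brk_le) (simp_all add: ideal_subspace ideal_r)

end


context lieA begin

lemma Bas_ex: "\<exists>B. finite B \<and> independent B \<and> span B = UNIV"
proof -
  obtain B0 where B0: "finite B0" "span B0 = UNIV" using FD unfolding lie_finite_dim_def by blast
  obtain B where B: "B \<subseteq> B0" "independent B" "B0 \<subseteq> span B"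
    using maximal_independent_subset[of B0] by blast
  have "span B = UNIV"
  proof -
    have "span B0 \<subseteq> span (span B)" using span_mono[OF B(3)] .
    then show ?thesis unfolding span_span B0(2) by blast
  qed
  moreover have "finite B" using B(1) B0(1) by (rule finite_subset)
  ultimately show ?thesis using B(2) by blast
qed

definition "Bas = (SOME B. finite B \<and> independent B \<and> span B = UNIV)"

lemma Bas: "finite Bas" "independent Bas" "span Bas = UNIV"
  using someI_ex[OF Bas_ex] unfolding Bas_def by blast+

sublocale fd: finite_dimensional_vector_space s Bas
  by unfold_locales (fact Bas)+

lemma dim_lt: assumes "subspace A" "subspace B" "A \<subset> B" shows "dim A < dim B"
proof -
  have "span A = A" "span B = B" using assms(1,2) by (simp_all only: span_eq_iff)
  then have "span A \<subset> span B" using assms(3) by (simp only:)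
  then show ?thesis by (rule fd.dim_psubset)
qed

lemma exists_max:
  assumes "P X" and sub: "\<And>Y. P Y \<Longrightarrow> subspace Y"
  shows "\<exists>M. P M \<and> X \<subseteq> M \<and> (\<forall>Y. P Y \<and> M \<subseteq> Y \<longrightarrow> Y = M)"
  using assms(1)
proof (induction "fd.dimension - dim X" arbitrary: X rule: less_induct)
  case less
  show ?case
  proof (cases "\<exists>Y. P Y \<and> X \<subseteq> Y \<and> Y \<noteq> X")
    case True
    then obtain Y where Y: "P Y" "X \<subseteq> Y" "Y \<noteq> X" by blast
    have "X \<subset> Y" using Y(2,3) by (simp add: psubset_eq)
    then have "dim X < dim Y" using dim_lt sub[OF less.prems] sub[OF Y(1)] by blast
    moreover have "dim Y \<le> fd.dimension" by (rule fd.dim_subset_UNIV)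
    ultimately have "fd.dimension - dim Y < fd.dimension - dim X" by linarith
    from less.hyps[OF this Y(1)] obtain M where M: "P M" "Y \<subseteq> M" "\<forall>Z. P Z \<and> M \<subseteq> Z \<longrightarrow> Z = M"
      by blast
    have "X \<subseteq> M" using Y(2) M(2) by (rule order_trans)
    then show ?thesis using M(1,3) by blast
  next
    case False 
    then have "\<forall>Z. P Z \<and> X \<subseteq> Z \<longrightarrow> Z = X" by blast
    then show ?thesis using less.prems by blast
  qed
qed

lemma exists_min:
  assumes "P X" and sub: "\<And>Y. P Y \<Longrightarrow> subspace Y"
  shows "\<exists>M. P M \<and> M \<subseteq> X \<and> (\<forall>Y. P Y \<and> Y \<subseteq> M \<longrightarrow> Y = M)"
  using assms(1)
proof (induction "dim X" arbitrary: X rule: less_induct)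
  case less
  show ?case
  proof (cases "\<exists>Y. P Y \<and> Y \<subseteq> X \<and> Y \<noteq> X")
    case True
    then obtain Y where Y: "P Y" "Y \<subseteq> X" "Y \<noteq> X" by blast
    have "Y \<subset> X" using Y(2,3) by (simp add: psubset_eq)
    then have "dim Y < dim X" using dim_lt sub[OF less.prems] sub[OF Y(1)] by blast
    from less.hyps[OF this Y(1)] obtain M where M: "P M" "M \<subseteq> Y" "\<forall>Z. P Z \<and> Z \<subseteq> M \<longrightarrow> Z = M"
      by blast
    have "M \<subseteq> X" using M(2) Y(2) by (rule order_trans)
    then show ?thesis using M(1,3) by blast
  next
    case False
    then have "\<forall>Z. P Z \<and> Z \<subseteq> X \<longrightarrow> Z = X" by blast
    then show ?thesis using less.prems by blast
  qed
qed

lemma exists_maximal: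
  assumes "subalg S" "S \<noteq> UNIV"
  shows "\<exists>M. maximal_subalgebra s b M \<and> S \<subseteq> M"
proof -
  have sub: "\<And>Y. subalg Y \<and> Y \<noteq> UNIV \<Longrightarrow> subspace Y" using subalg_subspace by blast
  have "subalg S \<and> S \<noteq> UNIV" using assms by blast
  from exists_max[of "\<lambda>Y. subalg Y \<and> Y \<noteq> UNIV", OF this sub]
  obtain M where M: "subalg M \<and> M \<noteq> UNIV" "S \<subseteq> M"
    "\<forall>Y. (subalg Y \<and> Y \<noteq> UNIV) \<and> M \<subseteq> Y \<longrightarrow> Y = M"
    by blast
  then have "maximal_subalgebra s b M" unfolding maximal_subalgebra_def by blast
  then show ?thesis using M(2) by blast
qed

lemma exists_completion:
  assumes "M \<noteq> UNIV"
  shows "\<exists>C. ideal_completion s b M C"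
proof -
  have sub: "\<And>Y. ideal Y \<and> \<not> Y \<subseteq> M \<Longrightarrow> subspace Y" using ideal_subspace by blast
  have "ideal UNIV \<and> \<not> UNIV \<subseteq> M" using assms ideal_UNIV by blast
  from exists_min[of "\<lambda>Y. ideal Y \<and> \<not> Y \<subseteq> M", OF this sub]
  obtain C where C: "ideal C \<and> \<not> C \<subseteq> M"
    "\<forall>Y. (ideal Y \<and> \<not> Y \<subseteq> M) \<and> Y \<subseteq> C \<longrightarrow> Y = C"
    by blast
  have "lie_completion s b M C"
    unfolding lie_completion_def
  proof (intro conjI allI impI)
    show "subalg C" using C(1) ideal_subalg by blast
    show "\<not> C \<subseteq> M" using C(1) by blast
    fix I assume "subalg I \<and> I \<subset> C \<and> ideal I"
    then show "I \<subseteq> M" using C(2) by blast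
  qed
  then have "ideal_completion s b M C"
    unfolding ideal_completion_def using C(1) by blast
  then show ?thesis by blast
qed

lemma some_completion:
  assumes "maximal_subalgebra s b M"
  shows "ideal_completion s b M (SOME C. ideal_completion s b M C)"
proof -
  have "M \<noteq> UNIV" using assms unfolding maximal_subalgebra_def by blast
  then have "\<exists>C. ideal_completion s b M C" by (rule exists_completion)
  then show ?thesis by (rule someI_ex)
qed

end


context lieA begin

definition "cpl M = (SOME C. ideal_completion s b M C)"

lemma ideal_index_eq: "ideal_index s b M = dim (cpl M) - dim (strict_core s b (cpl M))"
  unfolding ideal_index_def cpl_def Let_def by simp

lemma brk_mono: "A \<subseteq> A' \<Longrightarrow> B \<subseteq> B' \<Longrightarrow> brk A B \<subseteq> brk A' B'"
  unfolding brk_def by (rule span_mono) blast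

lemma maxD: assumes "maximal_subalgebra s b M"
  shows "subalg M" "M \<noteq> UNIV" "\<And>N. subalg N \<Longrightarrow> M \<subseteq> N \<Longrightarrow> N = M \<or> N = UNIV"
  using assms unfolding maximal_subalgebra_def by blast+

end

locale cmpl = lieA +
  fixes M C
  assumes maxM: "maximal_subalgebra s b M" and compC: "ideal_completion s b M C"
begin

lemma C_ideal: "ideal C" using compC unfolding ideal_completion_def by (rule conjunct2)
lemma C_comp: "lie_completion s b M C" using compC unfolding ideal_completion_def by (rule conjunct1)
lemma C_not: "\<not> C \<subseteq> M" using C_comp unfolding lie_completion_def by (elim conjE)
lemma C_min: assumes "ideal I" "I \<subset> C" shows "I \<subseteq> M"
proof -
  have H: "\<forall>I. subalg I \<and> I \<subset> C \<and> ideal I \<longrightarrow> I \<subseteq> M"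
    using C_comp unfolding lie_completion_def by (elim conjE)
  have "subalg I" using assms(1) by (rule ideal_subalg)
  then show ?thesis using H assms by blast
qed
lemma M_sub: "subalg M" using maxM by (rule maxD)
lemma M_subsp: "subspace M" using M_sub by (rule subalg_subspace)
lemma C_subsp: "subspace C" using C_ideal by (rule ideal_subspace)

abbreviation "sc \<equiv> strict_core s b C"

lemma sc_ideal: "ideal sc"
  unfolding strict_core_def by (rule ideal_span_Union) (simp only: mem_Collect_eq)

lemma sc_le: "sc \<subseteq> M \<inter> C"
  unfolding strict_core_def
proof (rule span_minimal)
  show "subspace (M \<inter> C)" using M_subsp C_subsp by (rule subspace_inter)
  show "\<Union>{I. ideal I \<and> I \<subset> C} \<subseteq> M \<inter> C"
  proof
    fix x assume "x \<in> \<Union>{I. ideal I \<and> I \<subset> C}"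
    then obtain I where I: "ideal I" "I \<subset> C" "x \<in> I" by auto
    have "I \<subseteq> M" using I(1,2) by (rule C_min)
    then show "x \<in> M \<inter> C" using I by auto
  qed
qed

lemma sc_ge: assumes "ideal I" "I \<subset> C" shows "I \<subseteq> sc"
proof -
  have "I \<subseteq> \<Union>{I. ideal I \<and> I \<subset> C}" using assms by auto
  also have "\<dots> \<subseteq> sc" unfolding strict_core_def by (rule span_superset)
  finally show ?thesis .
qed

lemma MC_UNIV: "ssum M C = UNIV"
proof -
  have "subalg (ssum M C)" using M_sub C_ideal by (rule subalg_ssum)
  moreover have "M \<subseteq> ssum M C" using C_subsp by (rule ssum_sup1)
  moreover have "ssum M C \<noteq> M"
  proof
    assume "ssum M C = M"
    then have "C \<subseteq> M" using ssum_sup2[OF M_subsp, of C] by simp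
    then show False using C_not by simp
  qed
  ultimately show ?thesis using maxD(3)[OF maxM] by metis
qed

lemma dim_formula: "dim UNIV + dim (M \<inter> C) = dim M + dim C"
  using fd.dim_sums_Int[OF M_subsp C_subsp] MC_UNIV unfolding ssum_def by simp

lemma decomp: obtains m c where "x = m + c" "m \<in> M" "c \<in> C"
proof -
  have "x \<in> ssum M C" using MC_UNIV by simp
  then show ?thesis using that unfolding ssum_def by blast
qed

lemma MC_ideal_if: assumes "brk C C \<subseteq> M \<inter> C" shows "ideal (M \<inter> C)"
proof (rule idealI)
  show "subspace (M \<inter> C)" using M_subsp C_subsp by (rule subspace_inter)
  fix x y assume y: "y \<in> M \<inter> C"
  obtain m c where mc: "x = m + c" "m \<in> M" "c \<in> C" by (rule decomp)
  have "b m y \<in> M \<inter> C" using mc y M_sub C_ideal by (simp add: subalg_b ideal_r)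
  moreover have "b c y \<in> brk C C" using mc(3) y by (intro brk_mem) auto
  then have "b c y \<in> M \<inter> C" by (rule subsetD[OF assms])
  ultimately show "b x y \<in> M \<inter> C"
    unfolding mc(1) bl by (rule subspace_add[OF subspace_inter[OF M_subsp C_subsp]])
qed

lemma sc_eq_if_ideal: assumes "ideal (M \<inter> C)" shows "sc = M \<inter> C"
proof -
  have "M \<inter> C \<subset> C" using C_not by blast
  then have "M \<inter> C \<subseteq> sc" using assms by (intro sc_ge)
  then show ?thesis using sc_le by (rule antisym[rotated])
qed

end

context lieA begin

lemma solvable_brk_ne:
  assumes "lie_solvable s b" "C \<noteq> {0}" "subspace C"
  shows "brk C C \<noteq> C"
proof
  assume eq: "brk C C = C"
  have "C \<subseteq> derived_series s b k" for k
  proof (induction k)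
    case 0 then show ?case by simp
  next
    case (Suc k)
    have "C = brk C C" using eq by simp
    also have "\<dots> \<subseteq> brk (derived_series s b k) (derived_series s b k)"
      using Suc by (intro brk_mono)
    finally show ?case by (simp only: ds_Suc)
  qed
  moreover obtain k where "derived_series s b k = {0}" using assms(1) unfolding lie_solvable_def by blast
  ultimately have "C \<subseteq> {0}" by blast
  moreover have "0 \<in> C" using assms(3) by (rule subspace_0)
  ultimately show False using assms(2) by blast
qed

lemma forward:
  assumes solv: "lie_solvable s b" and maxM: "maximal_subalgebra s b M"
  shows "ideal_index s b M = dim UNIV - dim M"
proof -
  have "cmpl s b M (cpl M)"
    by (intro cmpl.intro lieA_axioms cmpl_axioms.intro maxM) (unfold cpl_def, rule some_completion[OF maxM])
  then interpret cmpl s b M "cpl M" .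
  let ?C = "cpl M"
  have "0 \<in> M" using M_subsp by (rule subspace_0)
  then have "?C \<noteq> {0}" using C_not by auto
  then have ne: "brk ?C ?C \<noteq> ?C" using solv C_subsp by (intro solvable_brk_ne)
  have le: "brk ?C ?C \<subseteq> ?C" using C_ideal by (intro brk_le) (simp_all add: ideal_subspace ideal_r)
  have "brk ?C ?C \<subseteq> sc" using ne le by (intro sc_ge ideal_brk C_ideal) auto
  then have "brk ?C ?C \<subseteq> M \<inter> ?C" using sc_le by (rule order_trans)
  then have "sc = M \<inter> ?C" by (intro sc_eq_if_ideal MC_ideal_if)
  then show ?thesis unfolding ideal_index_eq using dim_formula by simp
qed

lemma cond_ideal:
  assumes maxM: "maximal_subalgebra s b M"
    and eq: "ideal_index s b M = dim UNIV - dim M"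
  shows "ideal (M \<inter> cpl M)"
proof -
  have "cmpl s b M (cpl M)"
    by (intro cmpl.intro lieA_axioms cmpl_axioms.intro maxM) (unfold cpl_def, rule some_completion[OF maxM])
  then interpret cmpl s b M "cpl M" .
  let ?C = "cpl M"
  have "dim sc \<le> dim (M \<inter> ?C)" using sc_le by (rule fd.dim_subset)
  moreover have "dim (M \<inter> ?C) \<le> dim ?C" by (rule fd.dim_subset) blast
  moreover have "dim ?C - dim sc = dim ?C - dim (M \<inter> ?C)"
    using eq dim_formula unfolding ideal_index_eq by simp
  ultimately have "dim (M \<inter> ?C) \<le> dim sc" by linarith
  then have "sc = M \<inter> ?C"
    by (rule fd.subspace_dim_equal[OF ideal_subspace[OF sc_ideal] subspace_inter[OF M_subsp C_subsp] sc_le])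
  then show ?thesis using sc_ideal by simp
qed

end


context lieA begin

lemma fp_add: "(b x ^^ n) (u + v) = (b x ^^ n) u + (b x ^^ n) v"
  by (induction n) (simp_all add: br)
lemma fp_scale: "(b x ^^ n) (s c u) = s c ((b x ^^ n) u)"
  by (induction n) (simp_all add: bsr)
lemma fp_diff: "(b x ^^ n) (u - v) = (b x ^^ n) u - (b x ^^ n) v"
  by (induction n) (simp_all add: bdr)
lemma fp_0: "(b x ^^ n) 0 = 0"
  by (induction n) simp_all
lemma fp_ideal: "ideal K \<Longrightarrow> u \<in> K \<Longrightarrow> (b x ^^ n) u \<in> K"
  by (induction n) (simp_all add: ideal_r)
lemma fp_mono: assumes "ideal K" "(b x ^^ n) u \<in> K" "n \<le> m" shows "(b x ^^ m) u \<in> K"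
proof -
  have "m = (m - n) + n" using assms(3) by simp
  then have "(b x ^^ m) u = (b x ^^ (m - n)) ((b x ^^ n) u)" by (metis comp_apply funpow_add)
  then show ?thesis using fp_ideal[OF assms(1,2)] by simp
qed
lemma fp_Suc_ideal: assumes "ideal D" "x \<in> D" shows "(b x ^^ Suc n) u \<in> D"
  using ideal_l[OF assms] by simp

lemma leibniz:
  "(b x ^^ n) (b y z) \<in> span {b ((b x ^^ i) y) ((b x ^^ j) z) | i j. i + j = n}"
proof (induction n)
  case 0
  have "b y z = b ((b x ^^ 0) y) ((b x ^^ 0) z)" by simp
  then have "b y z \<in> {b ((b x ^^ i) y) ((b x ^^ j) z) | i j. i + j = 0}" by blast
  then show ?case by (simp add: span_base)
next
  case (Suc n)
  let ?G = "\<lambda>n. {b ((b x ^^ i) y) ((b x ^^ j) z) | i j. i + j = n}"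
  have "b x ((b x ^^ n) (b y z)) \<in> span (?G (Suc n))"
    using Suc.IH
  proof (rule bspan_r)
    fix g assume "g \<in> ?G n"
    then obtain i j where g: "g = b ((b x ^^ i) y) ((b x ^^ j) z)" "i + j = n" by blast
    have e: "b x g = b ((b x ^^ Suc i) y) ((b x ^^ j) z) + b ((b x ^^ i) y) ((b x ^^ Suc j) z)"
      unfolding g(1) funpow.simps(2) comp_apply by (rule jac2)
    have "b ((b x ^^ Suc i) y) ((b x ^^ j) z) \<in> ?G (Suc n)"
      unfolding mem_Collect_eq by (rule exI[of _ "Suc i"], rule exI[of _ j]) (simp add: g(2))
    moreover have "b ((b x ^^ i) y) ((b x ^^ Suc j) z) \<in> ?G (Suc n)"
      unfolding mem_Collect_eq by (rule exI[of _ i], rule exI[of _ "Suc j"]) (simp add: g(2))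
    ultimately show "b x g \<in> span (?G (Suc n))" unfolding e by (intro span_add span_base)
  qed simp
  then show ?case by simp
qed

definition "L0 K x = {y. \<exists>n. (b x ^^ n) y \<in> K}"

lemma L0_subalg: assumes K: "ideal K" shows "subalg (L0 K x)"
  unfolding lie_subalgebra_def
proof (intro conjI ballI)
  have Ks: "subspace K" using K by (rule ideal_subspace)
  show "subspace (L0 K x)"
  proof (rule subspaceI)
    have "(b x ^^ 0) 0 \<in> K" using subspace_0[OF Ks] by simp
    then show "0 \<in> L0 K x" unfolding L0_def by blast
  next
    fix u v assume "u \<in> L0 K x" "v \<in> L0 K x"
    then obtain n1 n2 where n: "(b x ^^ n1) u \<in> K" "(b x ^^ n2) v \<in> K" unfolding L0_def by blast
    have "(b x ^^ (n1 + n2)) u \<in> K" using fp_mono[OF K n(1)] by simp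
    moreover have "(b x ^^ (n1 + n2)) v \<in> K" using fp_mono[OF K n(2)] by simp
    ultimately have "(b x ^^ (n1 + n2)) (u + v) \<in> K" unfolding fp_add by (rule subspace_add[OF Ks])
    then show "u + v \<in> L0 K x" unfolding L0_def by blast
  next
    fix c u assume "u \<in> L0 K x"
    then obtain n where n: "(b x ^^ n) u \<in> K" unfolding L0_def by blast
    have "(b x ^^ n) (s c u) \<in> K" unfolding fp_scale by (rule subspace_scale[OF Ks n])
    then show "s c u \<in> L0 K x" unfolding L0_def by blast
  qed
  fix u v assume "u \<in> L0 K x" "v \<in> L0 K x"
  then obtain n1 n2 where n: "(b x ^^ n1) u \<in> K" "(b x ^^ n2) v \<in> K" unfolding L0_def by blast
  have "span {b ((b x ^^ i) u) ((b x ^^ j) v) | i j. i + j = n1 + n2} \<subseteq> K"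
  proof (rule span_minimal[OF _ Ks], rule subsetI)
    fix g assume "g \<in> {b ((b x ^^ i) u) ((b x ^^ j) v) | i j. i + j = n1 + n2}"
    then obtain i j where g: "g = b ((b x ^^ i) u) ((b x ^^ j) v)" "i + j = n1 + n2" by blast
    show "g \<in> K"
    proof (cases "n1 \<le> i")
      case True
      then have "(b x ^^ i) u \<in> K" using fp_mono[OF K n(1)] by blast
      then show ?thesis unfolding g(1) by (rule ideal_l[OF K])
    next
      case False
      then have "n2 \<le> j" using g(2) by linarith
      then have "(b x ^^ j) v \<in> K" using fp_mono[OF K n(2)] by blast
      then show ?thesis unfolding g(1) by (rule ideal_r[OF K])
    qed
  qed
  then have "(b x ^^ (n1 + n2)) (b u v) \<in> K" using leibniz by blast
  then show "b u v \<in> L0 K x" unfolding L0_def by blast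
qed

lemma L0_K: assumes "ideal K" shows "K \<subseteq> L0 K x"
  unfolding L0_def by (auto intro: exI[of _ 0])

lemma L0_x: assumes "ideal K" shows "x \<in> L0 K x"
proof -
  have "(b x ^^ 1) x \<in> K" using subspace_0[OF ideal_subspace[OF assms]] by simp
  then show ?thesis unfolding L0_def by blast
qed

definition "Rg K x n = ssum (range (b x ^^ n)) K"

lemma range_fp_subspace: "subspace (range (b x ^^ n))"
proof (rule subspaceI)
  show "0 \<in> range (b x ^^ n)" using fp_0[of n x] by (metis rangeI)
next
  fix u v assume "u \<in> range (b x ^^ n)" "v \<in> range (b x ^^ n)"
  then obtain u' v' where "u = (b x ^^ n) u'" "v = (b x ^^ n) v'" by blast
  then have "u + v = (b x ^^ n) (u' + v')" by (simp add: fp_add)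
  then show "u + v \<in> range (b x ^^ n)" by simp
next
  fix c u assume "u \<in> range (b x ^^ n)"
  then obtain u' where "u = (b x ^^ n) u'" by blast
  then have "s c u = (b x ^^ n) (s c u')" by (simp add: fp_scale)
  then show "s c u \<in> range (b x ^^ n)" by simp
qed

lemma Rg_subspace: "ideal K \<Longrightarrow> subspace (Rg K x n)"
  unfolding Rg_def by (intro subspace_ssum range_fp_subspace ideal_subspace)

lemma Rg_mono: assumes "n \<le> m" shows "Rg K x m \<subseteq> Rg K x n"
proof
  fix z assume "z \<in> Rg K x m"
  then obtain w k where z: "z = (b x ^^ m) w + k" "k \<in> K" unfolding Rg_def ssum_def by blast
  have "m = n + (m - n)" using assms by simp
  then have "(b x ^^ m) w = (b x ^^ n) ((b x ^^ (m - n)) w)" by (metis comp_apply funpow_add)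
  then show "z \<in> Rg K x n" unfolding Rg_def ssum_def using z by blast
qed

lemma fitting:
  assumes K: "ideal K" and D: "ideal D" and x: "x \<in> D"
  shows "ssum (L0 K x) D = UNIV"
proof -
  define r where "r n = dim (Rg K x n)" for n
  define v0 where "v0 = (LEAST v. \<exists>m. r m = v)"
  have "\<exists>m. r m = v0" unfolding v0_def by (rule LeastI_ex) blast
  then obtain n0 where n0: "r n0 = v0" by blast
  have vmin: "v0 \<le> r m" for m unfolding v0_def by (rule Least_le) blast
  define N where "N = Suc n0"
  have "r N \<le> r n0" unfolding r_def N_def by (intro fd.dim_subset Rg_mono) simp
  then have rN: "r N = v0" using vmin[of N] n0 by simp
  have sub: "Rg K x (N + N) \<subseteq> Rg K x N" by (rule Rg_mono) simp
  have "dim (Rg K x N) \<le> dim (Rg K x (N + N))" using rN vmin[of "N+N"] unfolding r_def by simp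
  then have eqR: "Rg K x (N + N) = Rg K x N"
    by (intro fd.subspace_dim_equal Rg_subspace K sub)
  show ?thesis
  proof (rule set_eqI, rule iffI)
    fix y :: 'v
    have "(b x ^^ N) y \<in> Rg K x N" unfolding Rg_def using ssum_sup1[OF ideal_subspace[OF K]] by blast
    then have "(b x ^^ N) y \<in> Rg K x (N + N)" using eqR by simp
    then obtain w k where wk: "(b x ^^ N) y = (b x ^^ (N + N)) w + k" "k \<in> K"
      unfolding Rg_def ssum_def by blast
    have "(b x ^^ (N + N)) w = (b x ^^ N) ((b x ^^ N) w)" by (metis comp_apply funpow_add)
    then have "(b x ^^ N) (y - (b x ^^ N) w) = k" using wk(1) by (simp add: fp_diff)
    then have "y - (b x ^^ N) w \<in> L0 K x" unfolding L0_def using wk(2) by blast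
    moreover have "(b x ^^ N) w \<in> D" unfolding N_def by (rule fp_Suc_ideal[OF D x])
    moreover have "y = (y - (b x ^^ N) w) + (b x ^^ N) w" by simp
    ultimately show "y \<in> ssum (L0 K x) D" unfolding ssum_def by blast
  qed simp
qed

end


context lieA begin

lemma engel:
  assumes Kid: "ideal K"
  shows "subalg S \<Longrightarrow> K \<subseteq> S \<Longrightarrow> (\<forall>x\<in>S. \<forall>y. \<exists>n. (b x ^^ n) y \<in> K) \<Longrightarrow>
    subspace U \<Longrightarrow> subspace W \<Longrightarrow> W \<subset> U \<Longrightarrow> (\<forall>x\<in>S. \<forall>u\<in>U. b x u \<in> U) \<Longrightarrow>
    (\<forall>x\<in>S. \<forall>w\<in>W. b x w \<in> W) \<Longrightarrow> (\<forall>k\<in>K. \<forall>u\<in>U. b k u \<in> W) \<Longrightarrow>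
    (\<forall>x\<in>S. \<forall>u\<in>U. \<exists>n. (b x ^^ n) u \<in> W) \<Longrightarrow> \<exists>u\<in>U. u \<notin> W \<and> (\<forall>x\<in>S. b x u \<in> W)"
proof (induction "dim S" arbitrary: S U W rule: less_induct)
  case less
  note S = less.prems(1) and KS = less.prems(2) and G = less.prems(3)
    and U = less.prems(4) and W = less.prems(5) and WU = less.prems(6) and SU = less.prems(7)
    and SW = less.prems(8) and KUW = less.prems(9) and nilU = less.prems(10)
  have Ks: "subspace K" using Kid by (rule ideal_subspace)
  have Ss: "subspace S" using S by (rule subalg_subspace)
  show ?case
  proof (cases "K = S")
    case True
    obtain u where u: "u \<in> U" "u \<notin> W" using WU by blast
    then show ?thesis using KUW True by blast
  next
    case False
    then have KpS: "K \<subset> S" using KS by blast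
    have subP: "\<And>Y. subalg Y \<and> K \<subseteq> Y \<and> Y \<subset> S \<Longrightarrow> subspace Y"
      using subalg_subspace by blast
    have "subalg K \<and> K \<subseteq> K \<and> K \<subset> S" using KpS ideal_subalg[OF Kid] by blast
    from exists_max[of "\<lambda>Y. subalg Y \<and> K \<subseteq> Y \<and> Y \<subset> S", OF this subP]
    obtain T where T: "subalg T" "K \<subseteq> T" "T \<subset> S"
      and Tmax: "\<forall>Y. (subalg Y \<and> K \<subseteq> Y \<and> Y \<subset> S) \<and> T \<subseteq> Y \<longrightarrow> Y = T"
      by blast
    have Ts: "subspace T" using T(1) by (rule subalg_subspace)
    have dT: "dim T < dim S" using Ts Ss T(3) by (rule dim_lt)
    have GT: "\<forall>x\<in>T. \<forall>y. \<exists>n. (b x ^^ n) y \<in> K" using G T(3) by blast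
    \<comment> \<open>first application: T acting on S / T\<close>
    have "\<exists>u\<in>S. u \<notin> T \<and> (\<forall>x\<in>T. b x u \<in> T)"
    proof (rule less.hyps[OF dT T(1) T(2) GT Ss Ts T(3)])
      show "\<forall>x\<in>T. \<forall>u\<in>S. b x u \<in> S" using S T(3) subalg_b by blast
      show "\<forall>x\<in>T. \<forall>w\<in>T. b x w \<in> T" using T(1) subalg_b by blast
      show "\<forall>k\<in>K. \<forall>u\<in>S. b k u \<in> T" using ideal_l[OF Kid] T(2) by blast
      show "\<forall>x\<in>T. \<forall>u\<in>S. \<exists>n. (b x ^^ n) u \<in> T" using GT T(2) by blast
    qed
    then obtain y where y: "y \<in> S" "y \<notin> T" "\<forall>x\<in>T. b x y \<in> T" by blast
    define T' where "T' = ssum T (span {y})"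
    have bT: "b u v \<in> T" if uT': "u \<in> T'" and vT': "v \<in> T'" for u v
    proof -
      obtain t1 a1 where u: "u = t1 + a1" "t1 \<in> T" "a1 \<in> span {y}"
        using uT' unfolding T'_def ssum_def by blast
      obtain t2 a2 where v: "v = t2 + a2" "t2 \<in> T" "a2 \<in> span {y}"
        using vT' unfolding T'_def ssum_def by blast
      obtain c1 where c1: "a1 = s c1 y" using u(3) unfolding span_singleton by blast
      obtain c2 where c2: "a2 = s c2 y" using v(3) unfolding span_singleton by blast
      have e: "b u v = b t1 t2 + s c2 (b t1 y) + (- s c1 (b t2 y))"
        unfolding u(1) v(1) c1 c2 by (simp add: bl br bsl bsr anti[of y t2] algebra_simps scale_minus_right)
      have "b t1 t2 \<in> T" using T(1) u(2) v(2) by (rule subalg_b)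
      moreover have "s c2 (b t1 y) \<in> T" using y(3) u(2) Ts by (simp add: subspace_scale)
      moreover have "- s c1 (b t2 y) \<in> T" using y(3) v(2) Ts by (simp add: subspace_scale subspace_neg)
      ultimately show ?thesis unfolding e by (intro subspace_add[OF Ts])
    qed
    have T'sub: "subalg T'" unfolding lie_subalgebra_def
    proof (intro conjI ballI)
      show "subspace T'" unfolding T'_def using Ts by (intro subspace_ssum subspace_span)
      fix u v assume "u \<in> T'" "v \<in> T'"
      then have "b u v \<in> T" by (rule bT)
      then show "b u v \<in> T'" using ssum_sup1[of "span {y}" T] unfolding T'_def by blast
    qed
    have TT': "T \<subseteq> T'" unfolding T'_def by (rule ssum_sup1) (rule subspace_span)
    have yT': "y \<in> T'" unfolding T'_def using ssum_sup2[OF Ts, of "span {y}"] span_base[of y "{y}"] by blast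
    have T'S: "T' \<subseteq> S" unfolding T'_def
    proof (rule ssum_le[OF Ss])
      show "T \<subseteq> S" using T(3) by blast
      show "span {y} \<subseteq> S" using y(1) by (intro span_minimal Ss) simp
    qed
    have SeqT': "S = T'"
    proof (rule ccontr)
      assume "S \<noteq> T'"
      then have "subalg T' \<and> K \<subseteq> T' \<and> T' \<subset> S" using T'sub T(2) TT' T'S by blast
      then have "T' = T" using Tmax TT' by blast
      then show False using yT' y(2) by blast
    qed
    \<comment> \<open>second application: T acting on U / W\<close>
    have "\<exists>u\<in>U. u \<notin> W \<and> (\<forall>x\<in>T. b x u \<in> W)"
    proof (rule less.hyps[OF dT T(1) T(2) GT U W WU])
      show "\<forall>x\<in>T. \<forall>u\<in>U. b x u \<in> U" using SU T(3) by blast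
      show "\<forall>x\<in>T. \<forall>w\<in>W. b x w \<in> W" using SW T(3) by blast
      show "\<forall>k\<in>K. \<forall>u\<in>U. b k u \<in> W" using KUW .
      show "\<forall>x\<in>T. \<forall>u\<in>U. \<exists>n. (b x ^^ n) u \<in> W" using nilU T(3) by blast
    qed
    then obtain u0 where u0: "u0 \<in> U" "u0 \<notin> W" "\<forall>x\<in>T. b x u0 \<in> W" by blast
    define V0 where "V0 = {u \<in> U. \<forall>x\<in>T. b x u \<in> W}"
    have stab: "b y u \<in> V0" if uV0: "u \<in> V0" for u
    proof -
      have uU: "u \<in> U" and uT: "\<forall>x\<in>T. b x u \<in> W" using uV0 unfolding V0_def by auto
      have "b y u \<in> U" using SU y(1) uU by blast
      moreover have "b x (b y u) \<in> W" if xT: "x \<in> T" for x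
      proof -
        have "b x (b y u) = b (b x y) u + b y (b x u)" by (rule jac2)
        moreover have "b (b x y) u \<in> W" using uT y(3) xT by blast
        moreover have "b y (b x u) \<in> W" using SW y(1) uT xT by blast
        ultimately show ?thesis using subspace_add[OF W] by simp
      qed
      ultimately show ?thesis unfolding V0_def by blast
    qed
    have iter: "(b y ^^ n) u0 \<in> V0" for n
    proof (induction n)
      case 0 then show ?case using u0 unfolding V0_def by simp
    next
      case (Suc n) then show ?case using stab by simp
    qed
    have ex: "\<exists>n. (b y ^^ n) u0 \<in> W" using nilU y(1) u0(1) by blast
    define n where "n = (LEAST n. (b y ^^ n) u0 \<in> W)"
    have nW: "(b y ^^ n) u0 \<in> W" unfolding n_def using ex by (rule LeastI_ex)
    have "n \<noteq> 0" using nW u0(2) by (cases n) auto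
    then obtain m where m: "n = Suc m" by (cases n) auto
    have mW: "(b y ^^ m) u0 \<notin> W"
    proof
      assume "(b y ^^ m) u0 \<in> W"
      then have "n \<le> m" unfolding n_def by (rule Least_le)
      then show False using m by simp
    qed
    define u where "u = (b y ^^ m) u0"
    have uV: "u \<in> V0" unfolding u_def by (rule iter)
    have yu: "b y u \<in> W" using nW unfolding m u_def by simp
    have "\<forall>x\<in>S. b x u \<in> W"
    proof
      fix x assume "x \<in> S"
      then have "x \<in> T'" using SeqT' by simp
      then obtain t a where x: "x = t + a" "t \<in> T" "a \<in> span {y}" unfolding T'_def ssum_def by blast
      obtain c where c: "a = s c y" using x(3) unfolding span_singleton by blast
      have "b t u \<in> W" using uV x(2) unfolding V0_def by blast
      moreover have "b a u \<in> W" unfolding c bsl using yu W by (simp add: subspace_scale)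
      ultimately show "b x u \<in> W" unfolding x(1) bl by (rule subspace_add[OF W])
    qed
    moreover have "u \<in> U" "u \<notin> W" using uV mW unfolding V0_def u_def by auto
    ultimately show ?thesis by blast
  qed
qed

end


locale conv = lieA +
  fixes D K
  assumes D_ideal: "ideal D" and D_perf: "brk D D = D" and K_ideal: "ideal K"
    and KD: "K \<subset> D"
    and chief: "\<And>I. ideal I \<Longrightarrow> K \<subseteq> I \<Longrightarrow> I \<subseteq> D \<Longrightarrow> I = K \<or> I = D"
    and cond: "\<And>M. maximal_subalgebra s b M \<Longrightarrow> ideal (M \<inter> cpl M)"
begin

lemma Ds: "subspace D" using D_ideal by (rule ideal_subspace)
lemma Ks: "subspace K" using K_ideal by (rule ideal_subspace)

lemma mdk:
  assumes maxM: "maximal_subalgebra s b M" and KM: "K \<subseteq> M" and DM: "\<not> D \<subseteq> M"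
  shows "M \<inter> D \<subseteq> K"
proof -
  have "cmpl s b M (cpl M)"
    by (intro cmpl.intro lieA_axioms cmpl_axioms.intro maxM) (unfold cpl_def, rule some_completion[OF maxM])
  then interpret cmpl s b M "cpl M" .
  let ?C = "cpl M"
  have MC: "ideal (M \<inter> ?C)" using maxM by (rule cond)
  have MCs: "subspace (M \<inter> ?C)" using MC by (rule ideal_subspace)
  show ?thesis
  proof (cases "?C \<subseteq> D")
    case True
    let ?I1 = "ssum (M \<inter> ?C) K"
    have "ideal ?I1" using MC K_ideal by (rule ideal_ssum)
    moreover have "K \<subseteq> ?I1" using MCs by (rule ssum_sup2)
    moreover have "?I1 \<subseteq> D" using True KD by (intro ssum_le Ds) auto
    moreover have "?I1 \<subseteq> M" using KM by (intro ssum_le M_subsp) auto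
    ultimately have "?I1 = K" using chief DM by blast
    then have MCK: "M \<inter> ?C \<subseteq> K" using ssum_sup1[OF Ks, of "M \<inter> ?C"] by simp
    let ?I2 = "ssum ?C K"
    have "ideal ?I2" using C_ideal K_ideal by (rule ideal_ssum)
    moreover have "K \<subseteq> ?I2" using C_subsp by (rule ssum_sup2)
    moreover have "?I2 \<subseteq> D" using True KD by (intro ssum_le Ds) auto
    moreover have "?I2 \<noteq> K" using ssum_sup1[OF Ks, of ?C] C_not KM by blast
    ultimately have I2D: "?I2 = D" using chief by blast
    show ?thesis
    proof
      fix y assume y: "y \<in> M \<inter> D"
      then have "y \<in> ?I2" using I2D by simp
      then obtain c k where ck: "y = c + k" "c \<in> ?C" "k \<in> K" unfolding ssum_def by blast
      have "c = y - k" using ck(1) by simp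
      then have "c \<in> M" using y ck(3) KM subspace_diff[OF M_subsp] by blast
      then have "c \<in> K" using ck(2) MCK by blast
      then show "y \<in> K" unfolding ck(1) using ck(3) by (rule subspace_add[OF Ks])
    qed
  next
    case False
    have CD: "ideal (?C \<inter> D)" using C_ideal D_ideal by (rule ideal_inter)
    have "?C \<inter> D \<subset> ?C" using False by blast
    then have CDM: "?C \<inter> D \<subseteq> M" using CD by (intro C_min)
    let ?I3 = "ssum (?C \<inter> D) K"
    have "ideal ?I3" using CD K_ideal by (rule ideal_ssum)
    moreover have "K \<subseteq> ?I3" using CD by (intro ssum_sup2 ideal_subspace)
    moreover have "?I3 \<subseteq> D" using KD by (intro ssum_le Ds) auto
    moreover have "?I3 \<subseteq> M" using KM CDM by (intro ssum_le M_subsp) auto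
    ultimately have "?I3 = K" using chief DM by blast
    then have CDK: "?C \<inter> D \<subseteq> K" using ssum_sup1[OF Ks, of "?C \<inter> D"] by simp
    have MDs: "subspace (M \<inter> D)" using M_subsp Ds by (rule subspace_inter)
    have "ideal (M \<inter> D)"
    proof (rule idealI[OF MDs])
      fix x y assume y: "y \<in> M \<inter> D"
      obtain m c where mc: "x = m + c" "m \<in> M" "c \<in> ?C" by (rule decomp)
      have "b m y \<in> M \<inter> D" using mc y M_sub D_ideal by (simp add: subalg_b ideal_r)
      moreover have "b c y \<in> ?C \<inter> D" using mc y C_ideal D_ideal by (simp add: ideal_l ideal_r)
      then have "b c y \<in> M \<inter> D" using CDK KM KD by blast
      ultimately show "b x y \<in> M \<inter> D" unfolding mc(1) bl by (rule subspace_add[OF MDs])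
    qed
    moreover have "K \<subseteq> M \<inter> D" using KM KD by blast
    moreover have "M \<inter> D \<noteq> D" using DM by blast
    ultimately show ?thesis using chief[of "M \<inter> D"] by blast
  qed
qed

lemma nil: assumes x: "x \<in> D" shows "\<exists>n. (b x ^^ n) y \<in> K"
proof (cases "x \<in> K")
  case True
  have "(b x ^^ 1) y \<in> K" using ideal_l[OF K_ideal True] by simp
  then show ?thesis by blast
next
  case False
  have "L0 K x = UNIV"
  proof (rule ccontr)
    assume ne: "L0 K x \<noteq> UNIV"
    obtain M where M: "maximal_subalgebra s b M" "L0 K x \<subseteq> M"
      using exists_maximal[OF L0_subalg[OF K_ideal] ne] by blast
    have KM: "K \<subseteq> M" using L0_K[OF K_ideal] M(2) by blast
    have DM: "\<not> D \<subseteq> M"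
    proof
      assume "D \<subseteq> M"
      then have "ssum (L0 K x) D \<subseteq> M" using M(2) by (intro ssum_le subalg_subspace[OF maxD(1)[OF M(1)]])
      then have "M = UNIV" using fitting[OF K_ideal D_ideal x] by blast
      then show False using maxD(2)[OF M(1)] by blast
    qed
    have "x \<in> M \<inter> D" using L0_x[OF K_ideal] M(2) x by blast
    then show False using mdk[OF M(1) KM DM] False by blast
  qed
  then show ?thesis unfolding L0_def by blast
qed

lemma contradiction: False
proof -
  have "\<exists>u\<in>D. u \<notin> K \<and> (\<forall>x\<in>D. b x u \<in> K)"
  proof (rule engel[OF K_ideal ideal_subalg[OF D_ideal]])
    show "K \<subseteq> D" using KD by blast
    show "\<forall>x\<in>D. \<forall>y. \<exists>n. (b x ^^ n) y \<in> K" using nil by blast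
    show "subspace D" by (rule Ds)
    show "subspace K" by (rule Ks)
    show "K \<subset> D" by (rule KD)
    show "\<forall>x\<in>D. \<forall>u\<in>D. b x u \<in> D" using D_ideal ideal_r by blast
    show "\<forall>x\<in>D. \<forall>w\<in>K. b x w \<in> K" using K_ideal ideal_r by blast
    show "\<forall>k\<in>K. \<forall>u\<in>D. b k u \<in> K" using K_ideal ideal_l by blast
    show "\<forall>x\<in>D. \<forall>u\<in>D. \<exists>n. (b x ^^ n) u \<in> K" using nil by blast
  qed
  then obtain y where y: "y \<in> D" "y \<notin> K" "\<forall>x\<in>D. b x y \<in> K" by blast
  define Z where "Z = {z \<in> D. \<forall>x\<in>D. b x z \<in> K}"
  have Zs: "subspace Z"
  proof (rule subspaceI)
    show "0 \<in> Z" unfolding Z_def using subspace_0[OF Ds] subspace_0[OF Ks] by simp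
  next
    fix u v assume "u \<in> Z" "v \<in> Z"
    then show "u + v \<in> Z" unfolding Z_def using subspace_add[OF Ds] subspace_add[OF Ks]
      by (simp add: br)
  next
    fix c u assume "u \<in> Z"
    then show "s c u \<in> Z" unfolding Z_def using subspace_scale[OF Ds] subspace_scale[OF Ks]
      by (simp add: bsr)
  qed
  have "ideal Z"
  proof (rule idealI[OF Zs])
    fix w z assume z: "z \<in> Z"
    then have zD: "z \<in> D" and zK: "\<forall>x\<in>D. b x z \<in> K" unfolding Z_def by auto
    have "b w z \<in> D" using zD by (rule ideal_r[OF D_ideal])
    moreover have "b x (b w z) \<in> K" if xD: "x \<in> D" for x
    proof -
      have "b x (b w z) = b (b x w) z + b w (b x z)" by (rule jac2)
      moreover have "b (b x w) z \<in> K" using zK ideal_l[OF D_ideal xD] by blast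
      moreover have "b w (b x z) \<in> K" using zK xD ideal_r[OF K_ideal] by blast
      ultimately show ?thesis using subspace_add[OF Ks] by simp
    qed
    ultimately show "b w z \<in> Z" unfolding Z_def by blast
  qed
  moreover have "K \<subseteq> Z" unfolding Z_def using KD ideal_r[OF K_ideal] by blast
  moreover have "Z \<subseteq> D" unfolding Z_def by blast
  ultimately have "Z = K \<or> Z = D" by (rule chief)
  moreover have "y \<in> Z" unfolding Z_def using y by blast
  ultimately have ZD: "Z = D" using y(2) by blast
  have "brk D D \<subseteq> K"
  proof (rule brk_le[OF Ks])
    fix x z assume "x \<in> D" "z \<in> D"
    then show "b x z \<in> K" using ZD unfolding Z_def by blast
  qed
  then have "D \<subseteq> K" using D_perf by simp
  then show False using KD by blast
qed

end

context lieA begin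

lemma converse:
  assumes cnd: "\<forall>M. maximal_subalgebra s b M \<longrightarrow> ideal_index s b M = dim UNIV - dim M"
  shows "lie_solvable s b"
proof (rule ccontr)
  assume ns: "\<not> lie_solvable s b"
  let ?ds = "derived_series s b"
  define r where "r k = dim (?ds k)" for k
  define v0 where "v0 = (LEAST v. \<exists>m. r m = v)"
  have "\<exists>m. r m = v0" unfolding v0_def by (rule LeastI_ex) blast
  then obtain m where m: "r m = v0" by blast
  have vmin: "v0 \<le> r k" for k unfolding v0_def by (rule Least_le) blast
  define D where "D = ?ds m"
  have Did: "ideal D" unfolding D_def by (rule ds_ideal)
  have Dsub: "subspace D" using Did by (rule ideal_subspace)
  have dle: "dim D \<le> dim (?ds (Suc m))" using vmin[of "Suc m"] m unfolding r_def D_def by simp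
  have sub: "?ds (Suc m) \<subseteq> D" unfolding D_def by (rule ds_mono)
  have "?ds (Suc m) = D"
    by (rule fd.subspace_dim_equal[OF ideal_subspace[OF ds_ideal] Dsub sub dle])
  then have Dperf: "brk D D = D" unfolding ds_Suc D_def by simp
  have Dne: "D \<noteq> {0}" using ns unfolding lie_solvable_def D_def by blast
  have "0 \<in> D" using Dsub by (rule subspace_0)
  then have "{0} \<subset> D" using Dne by blast
  then have P0: "ideal {0} \<and> {0} \<subset> D" using ideal_0 by blast
  have subP: "\<And>Y. ideal Y \<and> Y \<subset> D \<Longrightarrow> subspace Y" using ideal_subspace by blast
  from exists_max[of "\<lambda>Y. ideal Y \<and> Y \<subset> D", OF P0 subP]
  obtain K where K: "ideal K" "K \<subset> D" and Kmax: "\<forall>Y. (ideal Y \<and> Y \<subset> D) \<and> K \<subseteq> Y \<longrightarrow> Y = K"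
    by blast
  have chief: "I = K \<or> I = D" if "ideal I" "K \<subseteq> I" "I \<subseteq> D" for I
  proof (cases "I = D")
    case False
    then have "I \<subset> D" using that(3) by blast
    then show ?thesis using Kmax that(1,2) by blast
  qed simp
  have cond: "ideal (M \<inter> cpl M)" if "maximal_subalgebra s b M" for M
    using that cnd cond_ideal by blast
  interpret conv s b D K
    by (intro conv.intro lieA_axioms conv_axioms.intro Did Dperf K chief cond) auto
  show False by (rule contradiction)
qed

end

theorem corollary2p6:
  fixes s :: "'f::field \<Rightarrow> 'v::ab_group_add \<Rightarrow> 'v" and b :: "'v \<Rightarrow> 'v \<Rightarrow> 'v"
  assumes "lie_algebra s b" and "lie_finite_dim s"
  shows "lie_solvable s b \<longleftrightarrow>
    (\<forall>M. maximal_subalgebra s b M \<longrightarrow>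
        ideal_index s b M = vector_space.dim s (UNIV :: 'v set) - vector_space.dim s M)"
proof -
  interpret lieA s b using assms by (rule lieA.intro)
  show ?thesis using forward converse by blast
qed


end
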